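(* There exist finite alphabets $\Sigma,\Gamma$, a function $f:\Sigma^*\to\Gamma^*$, integers $i,j>0$ and a tier $\tau$ on $\Sigma\cup\Gamma$ such that $f$ is $i,j$-TIOSL on tier $\tau$, but for every $k>0$ and every tier $\upsilon$ on $\Sigma\times\Gamma^*$, $f$ is not $k$-TSSL on tier $\upsilon$.
   Context: Strings: $\lambda$ is the empty string; $\rtimes$ is a boundary symbol not in any alphabet. For $m\ge0$, $\mathrm{suff}^m(x)$ is the string of the last $m$ symbols of $\rtimes^mx$. $\mathrm{lcp}(A)$ is the longest common prefix of a set of strings $A$. For $f:\Sigma^*\to\Gamma^*$: $f^{\gets}(x):=\mathrm{lcp}(\{f(xy)\mid y\in\Sigma^*\})$, and $f^{\to}_x$ is defined by $f(xy)=f^{\gets}(x)f^{\to}_x(y)$. A tier on a (possibly infinite) alphabet $A$ is a homomorphism $\tau:A^*\to A^*$ with $\tau(a)\in\{a,\lambda\}$ for each $a\in A$. Given $i,j>0$ and a tier $\tau$ on $\Sigma\cup\Gamma$, $f$ is $i,j$-TIOSL on $\tau$ if for all $w,x\in\Sigma^*$, $\mathrm{suff}^{i-1}(\tau(w))=\mathrm{suff}^{i-1}(\tau(x))$ and $\mathrm{suff}^{j-1}(\tau(f^{\gets}(w)))=\mathrm{suff}^{j-1}(\tau(f^{\gets}(x)))$ imply $f^{\to}_w=f^{\to}_x$. Actions of $f$: $\mathbb{A}_f:=\{\langle x,y\rangle\in\Sigma\times\Gamma^*\mid\exists z\in\Sigma^*.\ f^{\gets}(zx)=f^{\gets}(z)y\}$,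 written $x:y$. The run $f^{\Leftarrow}(x)$: if $|x|\le1$, $f^{\Leftarrow}(x):=x:f^{\gets}(x)$; if $x=yz$ with $|y|\ge1$, $|z|=1$, then $f^{\Leftarrow}(x):=f^{\Leftarrow}(y)(z:w)$ where $f^{\gets}(x)=f^{\gets}(y)w$. For a tier $\upsilon$ on $\Sigma\times\Gamma^*$ and $k>0$, $f$ is $k$-TSSL on $\upsilon$ if for all $x,y\in\Sigma^*$, $\mathrm{suff}^{k-1}(\upsilon(f^{\Leftarrow}(x)))=\mathrm{suff}^{k-1}(\upsilon(f^{\Leftarrow}(y)))$ implies $f^{\to}_x=f^{\to}_y$. *)

theory Defs
  imports Main "HOL-Library.Sublist"
begin

(* Strings are lists. The boundary symbol is None in 'a option (not in any alphabet). *)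

definition suff :: "nat \<Rightarrow> 'a list \<Rightarrow> 'a option list" where
  "suff m x = drop (length x) (replicate m None @ map Some x)"

definition lcp :: "'a list set \<Rightarrow> 'a list" where
  "lcp A = (THE p. (\<forall>a\<in>A. prefix p a) \<and> (\<forall>q. (\<forall>a\<in>A. prefix q a) \<longrightarrow> prefix q p))"

definition fl :: "'a set \<Rightarrow> ('a list \<Rightarrow> 'b list) \<Rightarrow> 'a list \<Rightarrow> 'b list" where
  "fl Sig f x = lcp {f (x @ y) | y. y \<in> lists Sig}"

(* f^{->}_x(y), defined by f(xy) = f^{<-}(x) f^{->}_x(y) *)
definition fr :: "'a set \<Rightarrow> ('a list \<Rightarrow> 'b list) \<Rightarrow> 'a list \<Rightarrow> 'a list \<Rightarrow> 'b list" where
  "fr Sig f x y = drop (length (fl Sig f x)) (f (x @ y))"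

definition is_tier :: "'a set \<Rightarrow> ('a list \<Rightarrow> 'a list) \<Rightarrow> bool" where
  "is_tier A tau \<longleftrightarrow> tau [] = [] \<and>
     (\<forall>u\<in>lists A. \<forall>v\<in>lists A. tau (u @ v) = tau u @ tau v) \<and>
     (\<forall>a\<in>A. tau [a] = [a] \<or> tau [a] = [])"

definition TIOSL :: "'a set \<Rightarrow> ('a list \<Rightarrow> 'a list) \<Rightarrow> nat \<Rightarrow> nat \<Rightarrow> ('a list \<Rightarrow> 'a list) \<Rightarrow> bool" where
  "TIOSL Sig f i j tau \<longleftrightarrow>
     (\<forall>w\<in>lists Sig. \<forall>x\<in>lists Sig.
        suff (i - 1) (tau w) = suff (i - 1) (tau x) \<and>
        suff (j - 1) (tau (fl Sig f w)) = suff (j - 1) (tau (fl Sig f x))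
        \<longrightarrow> (\<forall>y\<in>lists Sig. fr Sig f w y = fr Sig f x y))"

definition actions :: "'a set \<Rightarrow> ('a list \<Rightarrow> 'b list) \<Rightarrow> ('a \<times> 'b list) set" where
  "actions Sig f = {(x, y). x \<in> Sig \<and> (\<exists>z\<in>lists Sig. fl Sig f (z @ [x]) = fl Sig f z @ y)}"

(* Runs. An action x:w with x in Sig is (Some x, w); the pair lambda:f^{<-}(lambda)
   (only occurring as the run of the empty string) is (None, f^{<-}(lambda)).
   run_rev works on the reversed input. *)
primrec run_rev :: "'a set \<Rightarrow> ('a list \<Rightarrow> 'b list) \<Rightarrow> 'a list \<Rightarrow> ('a option \<times> 'b list) list" where
  "run_rev Sig f [] = [(None, fl Sig f [])]"
| "run_rev Sig f (z # ry) =
     (if ry = [] then [(Some z, fl Sig f [z])]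
      else run_rev Sig f ry @ [(Some z, drop (length (fl Sig f (rev ry))) (fl Sig f (rev ry @ [z])))])"

definition run :: "'a set \<Rightarrow> ('a list \<Rightarrow> 'b list) \<Rightarrow> 'a list \<Rightarrow> ('a option \<times> 'b list) list" where
  "run Sig f x = run_rev Sig f (rev x)"

definition run_alphabet :: "'a set \<Rightarrow> 'b set \<Rightarrow> ('a option \<times> 'b list) set" where
  "run_alphabet Sig Gam = {(a, w). (a = None \<or> the a \<in> Sig) \<and> w \<in> lists Gam}"

definition TSSL :: "'a set \<Rightarrow> ('a list \<Rightarrow> 'b list) \<Rightarrow> nat
     \<Rightarrow> (('a option \<times> 'b list) list \<Rightarrow> ('a option \<times> 'b list) list) \<Rightarrow> bool" where
  "TSSL Sig f k ups \<longleftrightarrow>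
     (\<forall>x\<in>lists Sig. \<forall>y\<in>lists Sig.
        suff (k - 1) (ups (run Sig f x)) = suff (k - 1) (ups (run Sig f y))
        \<longrightarrow> (\<forall>z\<in>lists Sig. fr Sig f x z = fr Sig f y z))"

end

theory Submission
  imports Defs
begin

definition SS :: "nat set" where "SS = {0,1,2}"

definition hh :: "nat list \<Rightarrow> nat list" where
  "hh w = concat (map (\<lambda>z. if z = 1 then [3] else if z = 2 then [4] else []) w)"

definition ff :: "nat list \<Rightarrow> nat list" where
  "ff w = hh w @ [5, if 0 \<in> set w then 6 else 7, if hh w = [] then 8 else last (hh w)]"

lemma hh_app[simp]: "hh (u @ v) = hh u @ hh v"
  by (simp add: hh_def)

lemma hh_simps[simp]: "hh [] = []" "hh [0] = []" "hh [1] = [3]" "hh [Suc 0] = [3]" "hh [2] = [4]"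
  by (simp_all add: hh_def)

lemma hh_rep[simp]: "hh (replicate n (Suc 0)) = replicate n 3"
  by (induct n) (auto simp: hh_def)

lemma hh_Cons0[simp]: "hh (0 # w) = hh w"
  by (simp add: hh_def)

lemma hh_set: "set (hh w) \<subseteq> {3,4}"
  by (induct w) (auto simp: hh_def)

lemma pref_lemma:
  assumes "prefix q (p @ a # s)" "prefix q (p @ b # t)" "a \<noteq> b"
  shows "prefix q p"
proof (rule ccontr)
  assume n: "\<not> prefix q p"
  from assms(1) n obtain us where u: "q = p @ us" "prefix us (a # s)"
    by (auto simp: prefix_append)
  from assms(2) n obtain vs where v: "q = p @ vs" "prefix vs (b # t)"
    by (auto simp: prefix_append)
  from u v have "us = vs" by simp
  moreover have "us \<noteq> []" using u n by auto
  ultimately show False using u(2) v(2) assms(3)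
    by (cases us) auto
qed

lemma fl_ff: "fl SS ff w = hh w"
  unfolding fl_def lcp_def
proof (rule the_equality)
  let ?A = "{ff (w @ y) |y. y \<in> lists SS}"
  have a1: "ff (w @ []) \<in> ?A" by blast
  have a2: "ff (w @ [1]) \<in> ?A" by (auto simp: SS_def)
  define X where "X = [if 0 \<in> set w then 6 else 7, if hh w = [] then 8 else last (hh w) :: nat]"
  define Y where "Y = [5, if 0 \<in> set (w @ [1]) then 6 else 7, 3 :: nat]"
  have e1: "ff (w @ []) = hh w @ 5 # X" by (simp add: ff_def X_def)
  have e2: "ff (w @ [1]) = hh w @ 3 # Y" by (simp add: ff_def Y_def)
  have key: "prefix q (hh w)" if "\<forall>a\<in>?A. prefix q a" for q
  proof -
    have p1: "prefix q (ff (w @ []))" using a1 that by blast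
    have p2: "prefix q (ff (w @ [1]))" using a2 that by blast
    have "prefix q (hh w @ 5 # X)" using p1 by (simp only: e1)
    moreover have "prefix q (hh w @ 3 # Y)" using p2 by (simp only: e2)
    ultimately show ?thesis by (rule pref_lemma) simp
  qed
  have all: "\<forall>a\<in>?A. prefix (hh w) a" by (auto simp: ff_def)
  show "(\<forall>a\<in>?A. prefix (hh w) a) \<and> (\<forall>q. (\<forall>a\<in>?A. prefix q a) \<longrightarrow> prefix q (hh w))"
    using all key by blast
  fix p assume "(\<forall>a\<in>?A. prefix p a) \<and> (\<forall>q. (\<forall>a\<in>?A. prefix q a) \<longrightarrow> prefix q p)"
  then have "prefix p (hh w)" "prefix (hh w) p" using key all by blast+
  then show "p = hh w" by (rule prefix_order.antisym)
qed

lemma fr_ff: "fr SS ff w y = hh y @ [5, if 0 \<in> set (w @ y) then 6 else 7,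
    if hh (w @ y) = [] then 8 else last (hh (w @ y))]"
  by (simp add: fr_def fl_ff ff_def)

definition act :: "nat \<Rightarrow> nat option \<times> nat list" where
  "act z = (Some z, hh [z])"

lemma run_rev_ff: "ry \<noteq> [] \<Longrightarrow> run_rev SS ff ry = map act (rev ry)"
proof (induct ry)
  case Nil then show ?case by simp
next
  case (Cons z ry)
  show ?case
  proof (cases "ry = []")
    case True then show ?thesis by (simp add: fl_ff act_def)
  next
    case False
    then show ?thesis using Cons by (simp add: fl_ff act_def)
  qed
qed

lemma run_ff: "w \<noteq> [] \<Longrightarrow> run SS ff w = map act w"
  by (simp add: run_def run_rev_ff)

lemma suff_app: "length v \<ge> m \<Longrightarrow> suff m (u @ v) = suff m v"
  by (simp add: suff_def)

lemma suff1: "suff (Suc 0) l = (if l = [] then [None] else [Some (last l)])"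
  by (cases l rule: rev_cases) (auto simp: suff_def)

lemma filt_empty: "w \<in> lists SS \<Longrightarrow> (filter (\<lambda>s. s \<in> {0,3,4}) w = []) = (0 \<notin> set w)"
  by (auto simp: SS_def filter_empty_conv)

lemma filt_hh: "filter (\<lambda>s. s \<in> {0,3,4}) (hh w) = hh w"
  using hh_set[of w] by (auto simp: filter_id_conv)

lemma act_in: "z \<in> SS \<Longrightarrow> act z \<in> run_alphabet SS {3,4,5,6,7,8}"
  by (auto simp: act_def run_alphabet_def SS_def)

lemma ups_rep:
  assumes t: "is_tier A ups" and X: "X \<in> A" and u: "ups [X] = [X]"
  shows "ups (replicate n X) = replicate n X"
proof (induct n)
  case 0 then show ?case using t by (simp add: is_tier_def)
next
  case (Suc n)
  have "ups ([X] @ replicate n X) = ups [X] @ ups (replicate n X)"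
  proof -
    have l1: "[X] \<in> lists A" using X by simp
    have l2: "replicate n X \<in> lists A" using X by (induct n) auto
    show ?thesis using t l1 l2 unfolding is_tier_def by blast
  qed
  then show ?case using Suc u by simp
qed

theorem proposition18:
  shows "\<exists>(Sig :: nat set) (Gam :: nat set) (f :: nat list \<Rightarrow> nat list) (i :: nat) (j :: nat) tau.
     finite Sig \<and> finite Gam \<and> (\<forall>x\<in>lists Sig. f x \<in> lists Gam) \<and>
     i > 0 \<and> j > 0 \<and> is_tier (Sig \<union> Gam) tau \<and> TIOSL Sig f i j tau \<and>
     (\<forall>k > 0. \<forall>ups. is_tier (run_alphabet Sig Gam) ups \<longrightarrow> \<not> TSSL Sig f k ups)"
proof (intro exI conjI)
  let ?G = "{3,4,5,6,7,8} :: nat set"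
  let ?tau = "filter (\<lambda>s::nat. s \<in> {0,3,4})"
  show "finite SS" by (simp add: SS_def)
  show "finite ?G" by simp
  show "\<forall>x\<in>lists SS. ff x \<in> lists ?G"
  proof
    fix x
    have "set (hh x) \<subseteq> {3,4}" by (rule hh_set)
    moreover have l: "hh x \<noteq> [] \<Longrightarrow> last (hh x) \<in> {3,4}" using hh_set[of x] last_in_set by blast
    ultimately show "ff x \<in> lists ?G" by (auto simp: ff_def dest: l)
  qed
  show "(0::nat) < 2" by simp
  show "(0::nat) < 2" by simp
  show "is_tier (SS \<union> ?G) ?tau" by (simp add: is_tier_def)
  show "TIOSL SS ff 2 2 ?tau"
    unfolding TIOSL_def
  proof (intro ballI impI)
    fix w x y
    assume w: "w \<in> lists SS" and x: "x \<in> lists SS" and y: "y \<in> lists SS"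
    assume h: "suff (2 - 1) (?tau w) = suff (2 - 1) (?tau x) \<and>
        suff (2 - 1) (?tau (fl SS ff w)) = suff (2 - 1) (?tau (fl SS ff x))"
    have "2 - 1 = Suc 0" by simp
    have s1: "suff (Suc 0) (?tau w) = suff (Suc 0) (?tau x)" using h by simp
    then have "(?tau w = []) = (?tau x = [])" unfolding suff1 by (auto split: if_splits)
    then have h1: "(0 \<in> set w) = (0 \<in> set x)"
      using filt_empty[OF w] filt_empty[OF x] by simp
    have h2: "(hh w = []) = (hh x = [])" and h3: "hh w \<noteq> [] \<Longrightarrow> last (hh w) = last (hh x)"
      using h unfolding fl_ff filt_hh suff1 \<open>2 - 1 = Suc 0\<close>
      by (auto split: if_splits)
    show "fr SS ff w y = fr SS ff x y"
      unfolding fr_ff using h1 h2 h3 by (auto simp: last_append)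
  qed
  show "\<forall>k>0. \<forall>ups. is_tier (run_alphabet SS ?G) ups \<longrightarrow> \<not> TSSL SS ff k ups"
  proof (intro allI impI)
    fix k :: nat and ups
    assume k: "0 < k" and t: "is_tier (run_alphabet SS ?G) ups"
    have in0: "act 0 \<in> run_alphabet SS ?G" "act 1 \<in> run_alphabet SS ?G" "act 2 \<in> run_alphabet SS ?G"
      by (rule act_in, simp add: SS_def)+
    have hom: "ups (u @ v) = ups u @ ups v" if "u \<in> lists (run_alphabet SS ?G)" "v \<in> lists (run_alphabet SS ?G)" for u v
      using t that by (simp add: is_tier_def)
    have "ups [act 1] = [act 1] \<or> ups [act 1] = []" using t in0 by (simp add: is_tier_def)
    then show "\<not> TSSL SS ff k ups"
    proof
      assume u: "ups [act 1] = [act 1]"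
      let ?p = "0 # replicate k 1" and ?q = "replicate k (1::nat)"
      have pS: "?p \<in> lists SS" and qS: "?q \<in> lists SS" by (auto simp: SS_def)
      have rp: "run SS ff ?p = [act 0] @ replicate k (act 1)"
        by (simp add: run_ff)
      have rq: "run SS ff ?q = replicate k (act 1)"
        using k by (simp add: run_ff)
      have ur: "ups (replicate k (act 1)) = replicate k (act 1)"
        by (rule ups_rep[OF t in0(2) u])
      have "ups (run SS ff ?p) = ups [act 0] @ replicate k (act 1)"
        unfolding rp using in0 ur by (subst hom) auto
      then have eq: "suff (k - 1) (ups (run SS ff ?p)) = suff (k - 1) (ups (run SS ff ?q))"
        using rq ur by (simp add: suff_app)
      have "fr SS ff ?p [] \<noteq> fr SS ff ?q []"
        unfolding fr_ff using k by simp
      then show ?thesis using pS qS eq unfolding TSSL_def by blast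
    next
      assume u: "ups [act 1] = []"
      let ?p = "[2, 1] :: nat list" and ?q = "[2] :: nat list"
      have pS: "?p \<in> lists SS" and qS: "?q \<in> lists SS" by (auto simp: SS_def)
      have "ups (run SS ff ?p) = ups ([act 2] @ [act 1])" by (simp add: run_ff)
      also have "\<dots> = ups [act 2]" using in0 u by (subst hom) auto
      also have "\<dots> = ups (run SS ff ?q)" by (simp add: run_ff)
      finally have eq: "suff (k - 1) (ups (run SS ff ?p)) = suff (k - 1) (ups (run SS ff ?q))"
        by simp
      have "fr SS ff ?p [] \<noteq> fr SS ff ?q []"
        unfolding fr_ff by (simp add: hh_def)
      then show ?thesis using pS qS eq unfolding TSSL_def by blast
    qed
  qed
qed

end
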